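(* There is an absolute constant $c > 0$ such that for every integer $L \geq 2$, every $m$, and every $\lambda \in [m]^{L+1}$ with pairwise distinct entries, the following holds: if $\lambda = \tau^0, \tau^1, \ldots, \tau^N$ is any sequence of states such that for each $s \in [N]$, $\tau^s = (j_s - 1, j_s)\tau^{s-1}$ for some $j_s \in \{1,\ldots,L\}$, and $\tau^N_L = \lambda_0$, then there exists $s \in \{0,\ldots,N\}$ such that $|\{\ell \in \{0,\ldots,L\} : \tau^s_\ell \neq \lambda_\ell\}| \geq c\log L$.
   Context: States are vectors $\tau = (\tau_0, \ldots, \tau_L) \in [m]^{L+1}$ (coordinate $\ell$ is level $\ell$); $(a,b)\tau$ denotes $\tau$ with the entries at levels $a$ and $b$ exchanged. Thus the sequence transforms $\lambda$ into a state whose level-$L$ entry is the original level-0 entry, using only swaps of adjacent levels. *)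

theory Defs
  imports Complex_Main
begin

definition swap_levels :: "nat \<Rightarrow> nat \<Rightarrow> nat list \<Rightarrow> nat list" where
  "swap_levels a b t = t[a := t ! b, b := t ! a]"

end

theory Submission
  imports Defs
begin

definition sw :: "nat \<Rightarrow> nat \<Rightarrow> nat" where
  "sw j p = (if p = j then Suc j else if p = Suc j then j else p)"

definition stp :: "nat \<Rightarrow> (nat \<Rightarrow> nat) \<Rightarrow> (nat \<Rightarrow> nat) \<Rightarrow> bool" where
  "stp L f g \<longleftrightarrow> (\<exists>j<L. g = f \<circ> sw j)"

definition gd :: "nat \<Rightarrow> (nat \<Rightarrow> nat) \<Rightarrow> bool" where
  "gd L f \<longleftrightarrow> bij f \<and> (\<forall>p>L. f p = p)"

definition cnt :: "(nat \<Rightarrow> nat) \<Rightarrow> nat \<Rightarrow> nat \<Rightarrow> nat" where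
  "cnt f lo hi = card {p. lo \<le> p \<and> p < hi \<and> f p \<noteq> p}"

definition cln :: "(nat \<Rightarrow> nat) \<Rightarrow> nat \<Rightarrow> nat \<Rightarrow> bool" where
  "cln f lo hi \<longleftrightarrow> (\<forall>p. lo \<le> p \<longrightarrow> p < hi \<longrightarrow> f p = p)"

lemma sw_sw[simp]: "sw j (sw j p) = p"
  by (simp add: sw_def)

lemma sw_comp: "sw j \<circ> sw j = id"
  by (rule ext) simp

lemma bij_sw: "bij (sw j)"
  by (metis bij_betw_imageI inj_on_inverseI sw_sw surj_def)

lemma sw_le: "sw j p \<le> Suc p" "p \<le> Suc (sw j p)"
  by (auto simp: sw_def)

lemma stp_sym: "stp L f g \<Longrightarrow> stp L g f"
  unfolding stp_def by (auto simp: comp_assoc sw_comp)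

lemma gd_stp: "stp L f g \<Longrightarrow> gd L f \<Longrightarrow> gd L g"
  unfolding stp_def gd_def
  by (auto simp: bij_comp bij_sw sw_def)

lemma gd_inv1[simp]: "gd L f \<Longrightarrow> f (inv f y) = y"
  unfolding gd_def by (meson bij_inv_eq_iff)

lemma gd_inv2[simp]: "gd L f \<Longrightarrow> inv f (f p) = p"
  unfolding gd_def by (simp add: bij_is_inj)

lemma gd_inv_eq: "gd L f \<Longrightarrow> f p = y \<Longrightarrow> inv f y = p"
  by auto

lemma gd_inj: "gd L f \<Longrightarrow> f p = f q \<Longrightarrow> p = q"
  unfolding gd_def by (meson bij_is_inj injD)

lemma stp_inv: assumes "stp L f g" "gd L f"
  shows "inv g y \<le> Suc (inv f y) \<and> inv f y \<le> Suc (inv g y)"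
proof -
  obtain j where j: "j < L" "g = f \<circ> sw j" using assms(1) unfolding stp_def by auto
  have gg: "gd L g" using gd_stp assms by blast
  have "g (sw j (inv f y)) = y" using j assms(2) by simp
  then have "inv g y = sw j (inv f y)" using gg gd_inv_eq by blast
  then show ?thesis using sw_le by simp
qed

lemma gd_le: "gd L f \<Longrightarrow> p \<le> L \<Longrightarrow> f p \<le> L"
  unfolding gd_def by (metis bij_is_inj injD not_le)

lemma gd_inv_le: "gd L f \<Longrightarrow> inv f y \<le> L \<longleftrightarrow> y \<le> L"
  by (metis gd_def gd_inv1 gd_inv2 gd_le not_le)

lemma cln_cnt: "cln f lo hi \<longleftrightarrow> cnt f lo hi = 0"
proof -
  have "finite {p. lo \<le> p \<and> p < hi \<and> f p \<noteq> p}" by (rule finite_subset[of _ "{..<hi}"]) auto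
  then show ?thesis unfolding cln_def cnt_def by auto
qed

lemma cnt_split: "lo \<le> mid \<Longrightarrow> mid \<le> hi \<Longrightarrow> cnt f lo hi = cnt f lo mid + cnt f mid hi"
proof -
  assume a: "lo \<le> mid" "mid \<le> hi"
  define A where "A = {p. lo \<le> p \<and> p < mid \<and> f p \<noteq> p}"
  define B where "B = {p. mid \<le> p \<and> p < hi \<and> f p \<noteq> p}"
  have e: "{p. lo \<le> p \<and> p < hi \<and> f p \<noteq> p} = A \<union> B"
    using a unfolding A_def B_def by auto
  have fA: "finite A" unfolding A_def by (rule finite_subset[of _ "{..<mid}"]) auto
  have fB: "finite B" unfolding B_def by (rule finite_subset[of _ "{..<hi}"]) auto
  have d: "A \<inter> B = {}" unfolding A_def B_def by auto
  have "card (A \<union> B) = card A + card B" using fA fB d by (rule card_Un_disjoint)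
  then show ?thesis unfolding cnt_def e by (simp add: A_def B_def)
qed

lemma first_hit:
  fixes P :: "nat \<Rightarrow> nat"
  assumes mv: "\<forall>t. t0 \<le> t \<longrightarrow> t < t1 \<longrightarrow> P (Suc t) \<le> Suc (P t)"
    and a0: "P t0 < A" and a1: "A \<le> P t1" and "t0 \<le> t1"
  shows "\<exists>ts. t0 < ts \<and> ts \<le> t1 \<and> P ts = A \<and> (\<forall>t. t0 \<le> t \<longrightarrow> t < ts \<longrightarrow> P t < A)"
proof -
  define ts where "ts = (LEAST t. t0 \<le> t \<and> A \<le> P t)"
  have ex: "t0 \<le> t1 \<and> A \<le> P t1" using assms by auto
  have h1: "t0 \<le> ts \<and> A \<le> P ts" unfolding ts_def by (rule LeastI[of _ t1]) (rule ex)
  have h2: "ts \<le> t1" unfolding ts_def by (rule Least_le) (rule ex)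
  have h3: "\<forall>t. t0 \<le> t \<longrightarrow> t < ts \<longrightarrow> P t < A"
  proof (intro allI impI)
    fix t assume "t0 \<le> t" "t < ts"
    have "\<not> (t0 \<le> t \<and> A \<le> P t)" using \<open>t < ts\<close> unfolding ts_def by (rule not_less_Least)
    then show "P t < A" using \<open>t0 \<le> t\<close> by simp
  qed
  have "ts \<noteq> t0" using h1 a0 by auto
  then have "t0 < ts" using h1 by auto
  then obtain t' where t': "ts = Suc t'" "t0 \<le> t'" by (cases ts) auto
  then have "P t' < A" using h3 by auto
  moreover have "P ts \<le> Suc (P t')" using mv t' h2 by auto
  ultimately have "P ts = A" using h1 by auto
  then show ?thesis using \<open>t0 < ts\<close> h2 h3 by blast
qed


definition CL :: "nat \<Rightarrow> nat \<Rightarrow> bool" where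
  "CL L k \<longleftrightarrow> (\<forall>lo hi (\<sigma>::nat \<Rightarrow> nat \<Rightarrow> nat) ta tb y. 2^k \<le> hi - lo \<longrightarrow> hi \<le> Suc L \<longrightarrow> ta \<le> tb \<longrightarrow>
     (\<forall>t. ta \<le> t \<longrightarrow> t < tb \<longrightarrow> stp L (\<sigma> t) (\<sigma> (Suc t))) \<longrightarrow>
     (\<forall>t. ta \<le> t \<longrightarrow> t \<le> tb \<longrightarrow> gd L (\<sigma> t)) \<longrightarrow>
     cln (\<sigma> ta) lo hi \<longrightarrow> (y < lo \<or> hi \<le> y) \<longrightarrow>
     inv (\<sigma> ta) y < lo \<longrightarrow> hi - 1 \<le> inv (\<sigma> tb) y \<longrightarrow>
     (\<exists>t. ta < t \<and> t \<le> tb \<and> Suc k \<le> cnt (\<sigma> t) lo hi))"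

definition CR :: "nat \<Rightarrow> nat \<Rightarrow> bool" where
  "CR L k \<longleftrightarrow> (\<forall>lo hi (\<sigma>::nat \<Rightarrow> nat \<Rightarrow> nat) ta tb y. 2^k \<le> hi - lo \<longrightarrow> hi \<le> Suc L \<longrightarrow> ta \<le> tb \<longrightarrow>
     (\<forall>t. ta \<le> t \<longrightarrow> t < tb \<longrightarrow> stp L (\<sigma> t) (\<sigma> (Suc t))) \<longrightarrow>
     (\<forall>t. ta \<le> t \<longrightarrow> t \<le> tb \<longrightarrow> gd L (\<sigma> t)) \<longrightarrow>
     cln (\<sigma> ta) lo hi \<longrightarrow> (y < lo \<or> hi \<le> y) \<longrightarrow>
     hi \<le> inv (\<sigma> ta) y \<longrightarrow> inv (\<sigma> tb) y \<le> lo \<longrightarrow>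
     (\<exists>t. ta < t \<and> t \<le> tb \<and> Suc k \<le> cnt (\<sigma> t) lo hi))"

definition CV :: "nat \<Rightarrow> nat \<Rightarrow> bool" where
  "CV L k \<longleftrightarrow> (\<forall>lo hi (\<sigma>::nat \<Rightarrow> nat \<Rightarrow> nat) ta tb y. 2^k \<le> hi - lo \<longrightarrow> hi \<le> Suc L \<longrightarrow> ta \<le> tb \<longrightarrow>
     (\<forall>t. ta \<le> t \<longrightarrow> t < tb \<longrightarrow> stp L (\<sigma> t) (\<sigma> (Suc t))) \<longrightarrow>
     (\<forall>t. ta \<le> t \<longrightarrow> t \<le> tb \<longrightarrow> gd L (\<sigma> t)) \<longrightarrow>
     cln (\<sigma> tb) lo hi \<longrightarrow> (y < lo \<or> hi \<le> y) \<longrightarrow>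
     inv (\<sigma> tb) y < lo \<longrightarrow> hi - 1 \<le> inv (\<sigma> ta) y \<longrightarrow>
     (\<exists>t. ta \<le> t \<and> t < tb \<and> Suc k \<le> cnt (\<sigma> t) lo hi))"

lemma CL_CV: assumes "CL L k" shows "CV L k"
  unfolding CV_def
proof (intro allI impI)
  fix lo hi t0 t1 y and \<sigma> :: "nat \<Rightarrow> nat \<Rightarrow> nat"
  assume a: "2^k \<le> hi - lo" "hi \<le> Suc L" "t0 \<le> t1"
    "\<forall>t. t0 \<le> t \<longrightarrow> t < t1 \<longrightarrow> stp L (\<sigma> t) (\<sigma> (Suc t))"
    "\<forall>t. t0 \<le> t \<longrightarrow> t \<le> t1 \<longrightarrow> gd L (\<sigma> t)"
    "cln (\<sigma> t1) lo hi" "y < lo \<or> hi \<le> y"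
    "inv (\<sigma> t1) y < lo" "hi - 1 \<le> inv (\<sigma> t0) y"
  define \<tau> where "\<tau> = (\<lambda>t. \<sigma> (t0 + t1 - t))"
  have p: "\<forall>t. t0 \<le> t \<longrightarrow> t < t1 \<longrightarrow> stp L (\<tau> t) (\<tau> (Suc t))"
  proof (intro allI impI)
    fix t assume t: "t0 \<le> t" "t < t1"
    have i1: "t0 \<le> t0 + t1 - Suc t" "t0 + t1 - Suc t < t1" using t by auto
    have "stp L (\<sigma> (t0 + t1 - Suc t)) (\<sigma> (Suc (t0 + t1 - Suc t)))"
      by (rule a(4)[rule_format, OF i1])
    moreover have "Suc (t0 + t1 - Suc t) = t0 + t1 - t" using t by auto
    ultimately have "stp L (\<sigma> (t0 + t1 - Suc t)) (\<sigma> (t0 + t1 - t))" by simp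
    then have "stp L (\<sigma> (t0 + t1 - t)) (\<sigma> (t0 + t1 - Suc t))" by (rule stp_sym)
    then show "stp L (\<tau> t) (\<tau> (Suc t))" unfolding \<tau>_def by simp
  qed
  have g: "\<forall>t. t0 \<le> t \<longrightarrow> t \<le> t1 \<longrightarrow> gd L (\<tau> t)" unfolding \<tau>_def using a(5) by auto
  have e0: "\<tau> t0 = \<sigma> t1" "\<tau> t1 = \<sigma> t0" unfolding \<tau>_def by auto
  have "\<exists>t. t0 < t \<and> t \<le> t1 \<and> Suc k \<le> cnt (\<tau> t) lo hi"
    using assms[unfolded CL_def, rule_format, where lo=lo and hi=hi and \<sigma>=\<tau> and ta=t0 and tb=t1 and y=y] a p g e0 by simp
  then obtain t where t: "t0 < t" "t \<le> t1" "Suc k \<le> cnt (\<tau> t) lo hi" by blast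
  show "\<exists>t. t0 \<le> t \<and> t < t1 \<and> Suc k \<le> cnt (\<sigma> t) lo hi"
  proof (rule exI[of _ "t0 + t1 - t"], intro conjI)
    show "t0 \<le> t0 + t1 - t" "t0 + t1 - t < t1" using t by auto
    have "\<tau> t = \<sigma> (t0 + t1 - t)" unfolding \<tau>_def by simp
    then show "Suc k \<le> cnt (\<sigma> (t0 + t1 - t)) lo hi" using t by simp
  qed
qed


definition mr :: "nat \<Rightarrow> nat \<Rightarrow> nat" where
  "mr L p = (if p \<le> L then L - p else p)"

lemma mr_mr[simp]: "mr L (mr L p) = p"
  by (simp add: mr_def)

lemma mr_inj: "mr L p = mr L q \<Longrightarrow> p = q"
  by (metis mr_mr)

lemma bij_mr: "bij (mr L)"
  by (metis bij_betw_imageI inj_on_inverseI mr_mr surj_def)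

lemma mr_sw: "j < L \<Longrightarrow> mr L (sw j (mr L p)) = sw (L - Suc j) p"
  unfolding mr_def sw_def by auto

definition mf :: "nat \<Rightarrow> (nat \<Rightarrow> nat) \<Rightarrow> nat \<Rightarrow> nat" where
  "mf L f = mr L \<circ> f \<circ> mr L"

lemma gd_mf: "gd L f \<Longrightarrow> gd L (mf L f)"
  unfolding gd_def mf_def by (auto simp: bij_comp bij_mr mr_def)

lemma stp_mf: assumes "stp L f g" shows "stp L (mf L f) (mf L g)"
proof -
  obtain j where j: "j < L" "g = f \<circ> sw j" using assms unfolding stp_def by auto
  have "mf L g = mf L f \<circ> sw (L - Suc j)"
  proof
    fix p
    have "mr L (sw (L - Suc j) p) = sw j (mr L p)"
      using mr_sw[OF j(1), of p] by (metis mr_mr)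
    then show "mf L g p = (mf L f \<circ> sw (L - Suc j)) p"
      unfolding mf_def j(2) by simp
  qed
  moreover have "L - Suc j < L" using j by auto
  ultimately show ?thesis unfolding stp_def by blast
qed

lemma inv_mf: "gd L f \<Longrightarrow> inv (mf L f) (mr L y) = mr L (inv f y)"
proof -
  assume g: "gd L f"
  have "mf L f (mr L (inv f y)) = mr L y" unfolding mf_def using g by simp
  then show ?thesis using gd_mf[OF g] gd_inv_eq by blast
qed

lemma cnt_mf: assumes "lo \<le> hi" "hi \<le> Suc L"
  shows "cnt (mf L f) (Suc L - hi) (Suc L - lo) = cnt f lo hi"
proof -
  define S where "S = {p. lo \<le> p \<and> p < hi \<and> f p \<noteq> p}"
  have e: "{p. Suc L - hi \<le> p \<and> p < Suc L - lo \<and> mf L f p \<noteq> p} = mr L ` S"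
  proof (intro equalityI subsetI)
    fix p assume p: "p \<in> {p. Suc L - hi \<le> p \<and> p < Suc L - lo \<and> mf L f p \<noteq> p}"
    then have pl: "p \<le> L" "lo \<le> mr L p" "mr L p < hi" using assms by (auto simp: mr_def)
    have "f (mr L p) \<noteq> mr L p" using p by (auto simp: mf_def)
    then have "mr L p \<in> S" using pl unfolding S_def by auto
    then show "p \<in> mr L ` S" by (metis image_eqI mr_mr)
  next
    fix p assume "p \<in> mr L ` S"
    then obtain q where q: "q \<in> S" "p = mr L q" by auto
    then have ql: "lo \<le> q" "q < hi" "f q \<noteq> q" unfolding S_def by auto
    then have "q \<le> L" using assms by auto
    then have "Suc L - hi \<le> p \<and> p < Suc L - lo" using q(2) ql assms by (auto simp: mr_def)
    moreover have "mf L f p \<noteq> p" using q(2) ql(3) by (auto simp: mf_def dest: mr_inj)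
    ultimately show "p \<in> {p. Suc L - hi \<le> p \<and> p < Suc L - lo \<and> mf L f p \<noteq> p}" by auto
  qed
  have "inj_on (mr L) S" by (meson inj_onI mr_inj)
  then show ?thesis unfolding cnt_def e S_def by (simp add: card_image)
qed

lemma cln_mf: assumes "cln f lo hi" "hi \<le> Suc L"
  shows "cln (mf L f) (Suc L - hi) (Suc L - lo)"
  unfolding cln_def
proof (intro allI impI)
  fix p assume p: "Suc L - hi \<le> p" "p < Suc L - lo"
  then have "lo \<le> mr L p" "mr L p < hi" using assms(2) by (auto simp: mr_def)
  then have "f (mr L p) = mr L p" using assms(1) unfolding cln_def by auto
  then show "mf L f p = p" unfolding mf_def by simp
qed


lemma CL_CR: assumes "CL L k" shows "CR L k"
  unfolding CR_def
proof (intro allI impI)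
  fix lo hi ta tb y and \<sigma> :: "nat \<Rightarrow> nat \<Rightarrow> nat"
  assume a: "2^k \<le> hi - lo" "hi \<le> Suc L" "ta \<le> tb"
    "\<forall>t. ta \<le> t \<longrightarrow> t < tb \<longrightarrow> stp L (\<sigma> t) (\<sigma> (Suc t))"
    "\<forall>t. ta \<le> t \<longrightarrow> t \<le> tb \<longrightarrow> gd L (\<sigma> t)"
    "cln (\<sigma> ta) lo hi" "y < lo \<or> hi \<le> y"
    "hi \<le> inv (\<sigma> ta) y" "inv (\<sigma> tb) y \<le> lo"
  define \<tau> where "\<tau> = (\<lambda>t. mf L (\<sigma> t))"
  have "(1::nat) \<le> 2^k" by simp
  then have lohi: "lo < hi" using a(1) by linarith
  have ga: "gd L (\<sigma> ta)" and gb: "gd L (\<sigma> tb)" using a(3,5) by auto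
  have "inv (\<sigma> tb) y \<le> L" using a(9) lohi a(2) by linarith
  then have yL: "y \<le> L" using gd_inv_le[OF gb] by simp
  have p0: "inv (\<sigma> ta) y \<le> L" using gd_inv_le[OF ga] yL by simp
  have p: "\<forall>t. ta \<le> t \<longrightarrow> t < tb \<longrightarrow> stp L (\<tau> t) (\<tau> (Suc t))"
    unfolding \<tau>_def using a(4) stp_mf by blast
  have g: "\<forall>t. ta \<le> t \<longrightarrow> t \<le> tb \<longrightarrow> gd L (\<tau> t)"
    unfolding \<tau>_def using a(5) gd_mf by blast
  have i0: "inv (\<tau> ta) (mr L y) = L - inv (\<sigma> ta) y"
    unfolding \<tau>_def using inv_mf[OF ga] p0 by (simp add: mr_def)
  have i1: "inv (\<tau> tb) (mr L y) = L - inv (\<sigma> tb) y"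
    using inv_mf[OF gb] a(9) lohi a(2) unfolding \<tau>_def by (simp add: mr_def)
  have c0: "cln (\<tau> ta) (Suc L - hi) (Suc L - lo)" unfolding \<tau>_def using cln_mf a(6) a(2) by blast
  have my: "mr L y = L - y" using yL by (simp add: mr_def)
  have fy: "mr L y < Suc L - hi \<or> Suc L - lo \<le> mr L y" using a(7) yL lohi a(2) my by auto
  have "\<exists>t. ta < t \<and> t \<le> tb \<and> Suc k \<le> cnt (\<tau> t) (Suc L - hi) (Suc L - lo)"
    apply (rule assms[unfolded CL_def, rule_format, where lo="Suc L - hi" and hi="Suc L - lo" and \<sigma>=\<tau> and ta=ta and tb=tb and y="mr L y"])
    using a(1,2,3) p g c0 fy i0 i1 a(8,9) p0 lohi by auto
  then obtain t where t: "ta < t" "t \<le> tb" "Suc k \<le> cnt (\<tau> t) (Suc L - hi) (Suc L - lo)" by blast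
  have "cnt (\<tau> t) (Suc L - hi) (Suc L - lo) = cnt (\<sigma> t) lo hi"
    unfolding \<tau>_def using cnt_mf lohi a(2) by simp
  then show "\<exists>t. ta < t \<and> t \<le> tb \<and> Suc k \<le> cnt (\<sigma> t) lo hi" using t by auto
qed


lemma CLD:
  assumes "CL L k" "2^k \<le> hi - lo" "hi \<le> Suc L" "ta \<le> tb"
    "\<And>t. ta \<le> t \<Longrightarrow> t < tb \<Longrightarrow> stp L (\<sigma> t) (\<sigma> (Suc t))"
    "\<And>t. ta \<le> t \<Longrightarrow> t \<le> tb \<Longrightarrow> gd L (\<sigma> t)"
    "cln (\<sigma> ta) lo hi" "y < lo \<or> hi \<le> y" "inv (\<sigma> ta) y < lo" "hi - 1 \<le> inv (\<sigma> tb) y"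
  shows "\<exists>t. ta < t \<and> t \<le> tb \<and> Suc k \<le> cnt (\<sigma> t) lo hi"
  apply (rule assms(1)[unfolded CL_def, rule_format, where lo=lo and hi=hi and \<sigma>=\<sigma> and ta=ta and tb=tb and y=y])
  using assms(2-) by auto

lemma CRD:
  assumes "CR L k" "2^k \<le> hi - lo" "hi \<le> Suc L" "ta \<le> tb"
    "\<And>t. ta \<le> t \<Longrightarrow> t < tb \<Longrightarrow> stp L (\<sigma> t) (\<sigma> (Suc t))"
    "\<And>t. ta \<le> t \<Longrightarrow> t \<le> tb \<Longrightarrow> gd L (\<sigma> t)"
    "cln (\<sigma> ta) lo hi" "y < lo \<or> hi \<le> y" "hi \<le> inv (\<sigma> ta) y" "inv (\<sigma> tb) y \<le> lo"
  shows "\<exists>t. ta < t \<and> t \<le> tb \<and> Suc k \<le> cnt (\<sigma> t) lo hi"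
  apply (rule assms(1)[unfolded CR_def, rule_format, where lo=lo and hi=hi and \<sigma>=\<sigma> and ta=ta and tb=tb and y=y])
  using assms(2-) by auto

lemma CVD:
  assumes "CV L k" "2^k \<le> hi - lo" "hi \<le> Suc L" "ta \<le> tb"
    "\<And>t. ta \<le> t \<Longrightarrow> t < tb \<Longrightarrow> stp L (\<sigma> t) (\<sigma> (Suc t))"
    "\<And>t. ta \<le> t \<Longrightarrow> t \<le> tb \<Longrightarrow> gd L (\<sigma> t)"
    "cln (\<sigma> tb) lo hi" "y < lo \<or> hi \<le> y" "inv (\<sigma> tb) y < lo" "hi - 1 \<le> inv (\<sigma> ta) y"
  shows "\<exists>t. ta \<le> t \<and> t < tb \<and> Suc k \<le> cnt (\<sigma> t) lo hi"
  apply (rule assms(1)[unfolded CV_def, rule_format, where lo=lo and hi=hi and \<sigma>=\<sigma> and ta=ta and tb=tb and y=y])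
  using assms(2-) by auto

lemma path_mv:
  assumes "\<And>t. ta \<le> t \<Longrightarrow> t < tb \<Longrightarrow> stp L (\<sigma> t) (\<sigma> (Suc t))"
    "\<And>t. ta \<le> t \<Longrightarrow> t \<le> tb \<Longrightarrow> gd L (\<sigma> t)" "ta \<le> t" "t < tb"
  shows "inv (\<sigma> (Suc t)) v \<le> Suc (inv (\<sigma> t) v) \<and> inv (\<sigma> t) v \<le> Suc (inv (\<sigma> (Suc t)) v)"
  by (rule stp_inv) (use assms in auto)

lemma cnt_pos: "\<not> cln f lo hi \<Longrightarrow> 1 \<le> cnt f lo hi"
  using cln_cnt by (metis less_one not_le)

lemma CL0: "CL L 0"
  unfolding CL_def
proof (intro allI impI)
  fix lo hi ta tb y and \<sigma> :: "nat \<Rightarrow> nat \<Rightarrow> nat"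
  assume a: "2^0 \<le> hi - lo" "hi \<le> Suc L" "ta \<le> tb"
    "\<forall>t. ta \<le> t \<longrightarrow> t < tb \<longrightarrow> stp L (\<sigma> t) (\<sigma> (Suc t))"
    "\<forall>t. ta \<le> t \<longrightarrow> t \<le> tb \<longrightarrow> gd L (\<sigma> t)"
    "cln (\<sigma> ta) lo hi" "y < lo \<or> hi \<le> y"
    "inv (\<sigma> ta) y < lo" "hi - 1 \<le> inv (\<sigma> tb) y"
  define P where "P = (\<lambda>t. inv (\<sigma> t) y)"
  have mv: "\<forall>t. ta \<le> t \<longrightarrow> t < tb \<longrightarrow> P (Suc t) \<le> Suc (P t)"
  proof (intro allI impI)
    fix t assume t: "ta \<le> t" "t < tb"
    then have "stp L (\<sigma> t) (\<sigma> (Suc t))" "gd L (\<sigma> t)" using a(4,5) by auto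
    then show "P (Suc t) \<le> Suc (P t)" unfolding P_def using stp_inv by blast
  qed
  have lohi: "lo < hi" using a(1) by simp
  obtain ts where ts: "ta < ts" "ts \<le> tb" "P ts = hi - 1"
    using first_hit[OF mv, of "hi - 1"] a(3,8,9) lohi unfolding P_def by fastforce
  have "\<sigma> ts (hi - 1) = y" using ts a(5) unfolding P_def by (metis gd_inv1 less_imp_le)
  then have "\<not> cln (\<sigma> ts) lo hi" using a(7) lohi unfolding cln_def by (metis Suc_diff_1 Suc_leI diff_le_self gr_implies_not0 le_less_trans lessI not_le)
  then show "\<exists>t. ta < t \<and> t \<le> tb \<and> Suc 0 \<le> cnt (\<sigma> t) lo hi" using ts cnt_pos by fastforce
qed


lemma CL_step: assumes IH: "CL L k" shows "CL L (Suc k)"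
  unfolding CL_def
proof (intro allI impI)
  have CR: "CR L k" using IH by (rule CL_CR)
  have CV: "CV L k" using IH by (rule CL_CV)
  fix lo hi ta tb y and \<sigma> :: "nat \<Rightarrow> nat \<Rightarrow> nat"
  assume a: "2^Suc k \<le> hi - lo" "hi \<le> Suc L" "ta \<le> tb"
    "\<forall>t. ta \<le> t \<longrightarrow> t < tb \<longrightarrow> stp L (\<sigma> t) (\<sigma> (Suc t))"
    "\<forall>t. ta \<le> t \<longrightarrow> t \<le> tb \<longrightarrow> gd L (\<sigma> t)"
    "cln (\<sigma> ta) lo hi" "y < lo \<or> hi \<le> y"
    "inv (\<sigma> ta) y < lo" "hi - 1 \<le> inv (\<sigma> tb) y"
  have pa: "\<And>t. ta \<le> t \<Longrightarrow> t < tb \<Longrightarrow> stp L (\<sigma> t) (\<sigma> (Suc t))" using a(4) by blast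
  have ga: "\<And>t. ta \<le> t \<Longrightarrow> t \<le> tb \<Longrightarrow> gd L (\<sigma> t)" using a(5) by blast
  define h where "h = (2::nat)^k"
  define mid where "mid = lo + h"
  have h1: "1 \<le> h" unfolding h_def by simp
  have h2: "2 * h \<le> hi - lo" using a(1) unfolding h_def by simp
  have lm: "lo < mid" "mid < hi" "2^k \<le> hi - mid" "2^k \<le> mid - lo" "mid \<le> Suc L"
    using h1 h2 a(2) unfolding mid_def h_def[symmetric] by auto
  define P where "P = (\<lambda>t. inv (\<sigma> t) y)"
  have mv: "\<forall>t. ta \<le> t \<longrightarrow> t < tb \<longrightarrow> P (Suc t) \<le> Suc (P t)"
    unfolding P_def using path_mv[where \<sigma>=\<sigma> and ta=ta and tb=tb and L=L, OF pa ga] by blast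
  obtain ts where ts: "ta < ts" "ts \<le> tb" "P ts = hi - 1" "\<forall>t. ta \<le> t \<longrightarrow> t < ts \<longrightarrow> P t < hi - 1"
    using first_hit[OF mv, of "hi - 1"] a(3,8,9) lm unfolding P_def by fastforce
  have sy: "\<And>t. ta \<le> t \<Longrightarrow> t \<le> tb \<Longrightarrow> \<sigma> t (P t) = y" unfolding P_def using ga gd_inv1 by blast
  have fo2: "\<And>t. ta \<le> t \<Longrightarrow> t \<le> tb \<Longrightarrow> cln (\<sigma> t) mid hi \<Longrightarrow> P t < mid \<or> hi \<le> P t"
  proof -
    fix t assume t: "ta \<le> t" "t \<le> tb" "cln (\<sigma> t) mid hi"
    show "P t < mid \<or> hi \<le> P t"
    proof (rule ccontr)
      assume "\<not> (P t < mid \<or> hi \<le> P t)"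
      then have "\<sigma> t (P t) = P t" using t(3) unfolding cln_def by auto
      then have "y = P t" using sy t by simp
      then show False using a(7) lm \<open>\<not> (P t < mid \<or> hi \<le> P t)\<close> by auto
    qed
  qed
  have fo1: "\<And>t. ta \<le> t \<Longrightarrow> t \<le> tb \<Longrightarrow> cln (\<sigma> t) lo mid \<Longrightarrow> P t < lo \<or> mid \<le> P t"
  proof -
    fix t assume t: "ta \<le> t" "t \<le> tb" "cln (\<sigma> t) lo mid"
    show "P t < lo \<or> mid \<le> P t"
    proof (rule ccontr)
      assume "\<not> (P t < lo \<or> mid \<le> P t)"
      then have "\<sigma> t (P t) = P t" using t(3) unfolding cln_def by auto
      then have "y = P t" using sy t by simp
      then show False using a(7) lm \<open>\<not> (P t < lo \<or> mid \<le> P t)\<close> by auto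
    qed
  qed
  have ncts: "\<not> cln (\<sigma> ts) mid hi"
  proof
    assume "cln (\<sigma> ts) mid hi"
    then have "P ts < mid \<or> hi \<le> P ts" using ts(1,2) by (intro fo2) auto
    then show False using ts(3) lm by auto
  qed
  have cs: "\<And>t. cnt (\<sigma> t) lo hi = cnt (\<sigma> t) lo mid + cnt (\<sigma> t) mid hi"
    using cnt_split lm by simp
  define S where "S = {t. ta \<le> t \<and> t \<le> ts \<and> cln (\<sigma> t) mid hi}"
  have fS: "finite S" unfolding S_def by (rule finite_subset[of _ "{..ts}"]) auto
  have taS: "ta \<in> S" unfolding S_def using a(6) ts lm by (auto simp: cln_def)
  define r where "r = Max S"
  have rS: "r \<in> S" unfolding r_def using fS taS Max_in by blast
  then have r: "ta \<le> r" "r \<le> ts" "cln (\<sigma> r) mid hi" unfolding S_def by auto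
  have rmax: "\<And>t. r < t \<Longrightarrow> t \<le> ts \<Longrightarrow> \<not> cln (\<sigma> t) mid hi"
  proof
    fix t assume t: "r < t" "t \<le> ts" "cln (\<sigma> t) mid hi"
    then have "t \<in> S" unfolding S_def using r by auto
    then have "t \<le> r" unfolding r_def using fS Max_ge by blast
    then show False using t by simp
  qed
  have rts: "r < ts" using r ncts le_neq_implies_less by blast
  have Pr: "P r < mid"
  proof -
    have "P r < hi - 1" using ts(4) r rts by auto
    moreover have "P r < mid \<or> hi \<le> P r" using fo2 r ts by auto
    ultimately show ?thesis by auto
  qed
  obtain w where w: "r < w" "w \<le> ts" "Suc k \<le> cnt (\<sigma> w) mid hi"
  proof -
    have "\<exists>t. r < t \<and> t \<le> ts \<and> Suc k \<le> cnt (\<sigma> t) mid hi"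
      apply (rule CLD[OF IH, where y=y])
      using lm a(2) r rts ts pa ga a(7) Pr unfolding P_def by auto
    then show ?thesis using that by blast
  qed
  show "\<exists>t. ta < t \<and> t \<le> tb \<and> Suc (Suc k) \<le> cnt (\<sigma> t) lo hi"
  proof (cases "cln (\<sigma> w) lo mid")
    case False
    then have "1 \<le> cnt (\<sigma> w) lo mid" by (rule cnt_pos)
    then show ?thesis using w cs[of w] r ts by (intro exI[of _ w]) auto
  next
    case clw: True
    show ?thesis
    proof (cases "\<exists>c. r \<le> c \<and> c \<le> w \<and> cln (\<sigma> c) lo mid \<and> P c < lo")
      case True
      then obtain c where c: "r \<le> c" "c \<le> w" "cln (\<sigma> c) lo mid" "P c < lo" by blast
      have "\<exists>t. c < t \<and> t \<le> ts \<and> Suc k \<le> cnt (\<sigma> t) lo mid"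
        apply (rule CLD[OF IH, where y=y])
        using lm r c w ts pa ga a(7) unfolding P_def by auto
      then obtain u where u: "c < u" "u \<le> ts" "Suc k \<le> cnt (\<sigma> u) lo mid" by blast
      have "\<not> cln (\<sigma> u) mid hi" using rmax u c by auto
      then have "1 \<le> cnt (\<sigma> u) mid hi" by (rule cnt_pos)
      then show ?thesis using u c r ts cs[of u] by (intro exI[of _ u]) auto
    next
      case nc: False
      define b where "b = (LEAST c. r \<le> c \<and> c \<le> w \<and> cln (\<sigma> c) lo mid)"
      have b: "r \<le> b \<and> b \<le> w \<and> cln (\<sigma> b) lo mid" unfolding b_def
        by (rule LeastI[of _ w]) (use w clw in auto)
      have bmin: "\<And>c. r \<le> c \<Longrightarrow> c < b \<Longrightarrow> \<not> cln (\<sigma> c) lo mid"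
      proof -
        fix c assume c: "r \<le> c" "c < b"
        have "\<not> (r \<le> c \<and> c \<le> w \<and> cln (\<sigma> c) lo mid)" using c(2) unfolding b_def by (rule not_less_Least)
        then show "\<not> cln (\<sigma> c) lo mid" using c b by auto
      qed
      have Pb: "mid \<le> P b" using fo1[of b] b r w ts nc by fastforce
      have rb: "r < b" using b Pb Pr le_neq_implies_less by fastforce
      have gr: "gd L (\<sigma> r)" and gb: "gd L (\<sigma> b)" using ga r b w ts by auto
      have ir: "inj (\<sigma> r)" and ib: "inj (\<sigma> b)" using gr gb unfolding gd_def by (auto simp: bij_is_inj)
      define Hr where "Hr = \<sigma> r ` {..<mid}"
      define Hb where "Hb = \<sigma> b ` {..<mid}"
      have cHr: "card Hr = mid" unfolding Hr_def using ir by (simp add: card_image inj_on_subset)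
      have cHb: "card Hb = mid" unfolding Hb_def using ib by (simp add: card_image inj_on_subset)
      have yHr: "y \<in> Hr" unfolding Hr_def using sy[of r] r ts Pr by auto
      have yHb: "y \<notin> Hb"
      proof
        assume "y \<in> Hb"
        then obtain q where q: "q < mid" "\<sigma> b q = y" unfolding Hb_def by auto
        then have "P b = q" unfolding P_def using gb gd_inv_eq by blast
        then show False using q Pb by simp
      qed
      have "\<not> Hb \<subseteq> Hr"
      proof
        assume "Hb \<subseteq> Hr"
        moreover have "finite Hr" unfolding Hr_def by simp
        ultimately have "Hb = Hr" using cHr cHb card_subset_eq by metis
        then show False using yHr yHb by simp
      qed
      then obtain q where q: "q < mid" "\<sigma> b q \<notin> Hr" unfolding Hb_def by auto
      define u where "u = \<sigma> b q"
      define qr where "qr = inv (\<sigma> r) u"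
      have squ: "\<sigma> r qr = u" unfolding qr_def using gr by simp
      have qr: "mid \<le> qr"
      proof (rule ccontr)
        assume "\<not> mid \<le> qr"
        then have "u \<in> Hr" unfolding Hr_def using squ by auto
        then show False using q unfolding u_def by simp
      qed
      have ibu: "inv (\<sigma> b) u = q" unfolding u_def using gb by simp
      have bts: "b \<le> ts" using b w by auto
      show ?thesis
      proof (cases "qr < hi")
        case True
        have "\<sigma> r qr = qr" using r(3) qr True unfolding cln_def by auto
        then have uqr: "u = qr" using squ by simp
        have qlo: "q < lo"
        proof (rule ccontr)
          assume "\<not> q < lo"
          then have "\<sigma> b q = q" using b q unfolding cln_def by auto
          then show False using uqr qr q unfolding u_def by simp
        qed
        have "inv (\<sigma> r) u \<le> Suc (inv (\<sigma> (Suc r)) u)"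
          using path_mv[where \<sigma>=\<sigma> and ta=ta and tb=tb and L=L, OF pa ga, of r] r rb bts ts by auto
        then have m1: "mid - 1 \<le> inv (\<sigma> (Suc r)) u" using qr unfolding qr_def by simp
        have "\<exists>t. Suc r \<le> t \<and> t < b \<and> Suc k \<le> cnt (\<sigma> t) lo mid"
          apply (rule CVD[OF CV, where y=u])
          using lm rb b r bts ts pa ga uqr qr qlo ibu m1 by auto
        then obtain s where s: "Suc r \<le> s" "s < b" "Suc k \<le> cnt (\<sigma> s) lo mid" by blast
        have "\<not> cln (\<sigma> s) mid hi" using rmax s bts by auto
        then have "1 \<le> cnt (\<sigma> s) mid hi" by (rule cnt_pos)
        then show ?thesis using s r bts ts cs[of s] by (intro exI[of _ s]) auto
      next
        case False
        have fu: "u < mid \<or> hi \<le> u"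
        proof (rule ccontr)
          assume nu: "\<not> (u < mid \<or> hi \<le> u)"
          then have "\<sigma> r u = u" using r(3) unfolding cln_def by auto
          then have "qr = u" using squ gr gd_inj by metis
          then show False using False nu by simp
        qed
        have b1: "Suc (b - 1) = b" using rb by simp
        have "inv (\<sigma> (b - 1)) u \<le> Suc (inv (\<sigma> (Suc (b - 1))) u)"
          using path_mv[where \<sigma>=\<sigma> and ta=ta and tb=tb and L=L, OF pa ga, of "b - 1"] r rb bts ts by auto
        then have m2: "inv (\<sigma> (b - 1)) u \<le> mid" using b1 ibu q by simp
        have "\<exists>t. r < t \<and> t \<le> b - 1 \<and> Suc k \<le> cnt (\<sigma> t) mid hi"
          apply (rule CRD[OF CR, where y=u])
          using lm a(2) rb r bts ts pa ga fu False qr_def m2 by auto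
        then obtain s where s: "r < s" "s \<le> b - 1" "Suc k \<le> cnt (\<sigma> s) mid hi" by blast
        have "\<not> cln (\<sigma> s) lo mid" using bmin s rb by auto
        then have "1 \<le> cnt (\<sigma> s) lo mid" by (rule cnt_pos)
        then show ?thesis using s r bts ts cs[of s] by (intro exI[of _ s]) auto
      qed
    qed
  qed
qed

lemma CL_all: "CL L k"
  by (induction k) (auto intro: CL0 CL_step)


lemma swap_nth: "j < length t \<Longrightarrow> 0 < j \<Longrightarrow> p < length t \<Longrightarrow> swap_levels (j-1) j t ! p = t ! (sw (j-1) p)"
proof -
  assume a: "j < length t" "0 < j" "p < length t"
  then obtain i where i: "j = Suc i" by (cases j) auto
  show ?thesis unfolding swap_levels_def sw_def i using a i by (auto simp: nth_list_update)
qed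

lemma sw_le_L: "j < L \<Longrightarrow> p \<le> L \<Longrightarrow> sw j p \<le> L"
  unfolding sw_def by auto

lemma gd_id: "gd L id"
  unfolding gd_def by simp

lemma main_bound:
  fixes L m :: nat and lam :: "nat list" and tau :: "nat \<Rightarrow> nat list" and N :: nat
  assumes L2: "L \<ge> 2" and len: "length lam = L + 1" and sub: "set lam \<subseteq> {1..m}"
    and dist: "distinct lam" and t0: "tau 0 = lam"
    and steps: "\<forall>s\<in>{1..N}. \<exists>j\<in>{1..L}. tau s = swap_levels (j - 1) j (tau (s - 1))"
    and fin: "tau N ! L = lam ! 0"
  shows "\<exists>s\<le>N. ln (real L) \<le> real (card {l. l \<le> L \<and> tau s ! l \<noteq> lam ! l})"
proof -
  define rep where "rep s f \<longleftrightarrow> gd L f \<and> length (tau s) = Suc L \<and> (\<forall>p\<le>L. tau s ! p = lam ! f p)" for s f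
  have lamq: "\<And>a b. a \<le> L \<Longrightarrow> b \<le> L \<Longrightarrow> lam ! a = lam ! b \<longleftrightarrow> a = b"
    using dist len by (simp add: nth_eq_iff_index_eq)
  have uniq: "\<And>s f g. rep s f \<Longrightarrow> rep s g \<Longrightarrow> f = g"
  proof
    fix s f g x assume f: "rep s f" and g: "rep s g"
    show "f x = g x"
    proof (cases "x \<le> L")
      case True
      then have "lam ! f x = lam ! g x" using f g unfolding rep_def by auto
      moreover have "f x \<le> L" "g x \<le> L" using f g True gd_le unfolding rep_def by auto
      ultimately show ?thesis using lamq by blast
    next
      case False
      then show ?thesis using f g unfolding rep_def gd_def by auto
    qed
  qed
  have stepj: "\<And>s. s < N \<Longrightarrow> \<exists>j. 1 \<le> j \<and> j \<le> L \<and> tau (Suc s) = swap_levels (j - 1) j (tau s)"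
  proof -
    fix s assume "s < N"
    then have "Suc s \<in> {1..N}" by auto
    then show "\<exists>j. 1 \<le> j \<and> j \<le> L \<and> tau (Suc s) = swap_levels (j - 1) j (tau s)"
      using steps by fastforce
  qed
  have repstep: "\<And>s f j. rep s f \<Longrightarrow> 1 \<le> j \<Longrightarrow> j \<le> L \<Longrightarrow> tau (Suc s) = swap_levels (j - 1) j (tau s)
      \<Longrightarrow> rep (Suc s) (f \<circ> sw (j - 1)) \<and> stp L f (f \<circ> sw (j - 1))"
  proof -
    fix s f j assume r: "rep s f" and j: "1 \<le> j" "j \<le> L" and e: "tau (Suc s) = swap_levels (j - 1) j (tau s)"
    have st: "stp L f (f \<circ> sw (j - 1))" unfolding stp_def using j by (intro exI[of _ "j - 1"]) auto
    have g: "gd L (f \<circ> sw (j - 1))" using gd_stp[OF st] r unfolding rep_def by blast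
    have l: "length (tau (Suc s)) = Suc L" using e r unfolding rep_def swap_levels_def by simp
    have "\<forall>p\<le>L. tau (Suc s) ! p = lam ! (f \<circ> sw (j - 1)) p"
    proof (intro allI impI)
      fix p assume p: "p \<le> L"
      have "tau (Suc s) ! p = tau s ! (sw (j - 1) p)"
        unfolding e using r j p unfolding rep_def by (intro swap_nth) auto
      also have "\<dots> = lam ! f (sw (j - 1) p)"
        using r sw_le_L[of "j - 1" L p] j p unfolding rep_def by auto
      finally show "tau (Suc s) ! p = lam ! (f \<circ> sw (j - 1)) p" by simp
    qed
    then show "rep (Suc s) (f \<circ> sw (j - 1)) \<and> stp L f (f \<circ> sw (j - 1))"
      using g l st unfolding rep_def by blast
  qed
  have rep0: "rep 0 id" unfolding rep_def using gd_id t0 len by simp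
  have exrep: "\<And>s. s \<le> N \<Longrightarrow> \<exists>f. rep s f"
  proof -
    fix s show "s \<le> N \<Longrightarrow> \<exists>f. rep s f"
    proof (induction s)
      case 0 then show ?case using rep0 by blast
    next
      case (Suc s)
      then obtain f where f: "rep s f" by auto
      obtain j where "1 \<le> j" "j \<le> L" "tau (Suc s) = swap_levels (j - 1) j (tau s)"
        using stepj Suc by (metis Suc_le_lessD)
      then show ?case using repstep f by blast
    qed
  qed
  define \<sigma> where "\<sigma> s = (SOME f. rep s f)" for s
  have rs: "\<And>s. s \<le> N \<Longrightarrow> rep s (\<sigma> s)" unfolding \<sigma>_def using exrep by (metis someI_ex)
  have gs: "\<And>t. 0 \<le> t \<Longrightarrow> t \<le> N \<Longrightarrow> gd L (\<sigma> t)" using rs unfolding rep_def by blast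
  have ps: "\<And>t. 0 \<le> t \<Longrightarrow> t < N \<Longrightarrow> stp L (\<sigma> t) (\<sigma> (Suc t))"
  proof -
    fix t assume t: "0 \<le> t" "t < N"
    obtain j where j: "1 \<le> j" "j \<le> L" "tau (Suc t) = swap_levels (j - 1) j (tau t)"
      using stepj t by blast
    have a: "rep (Suc t) (\<sigma> t \<circ> sw (j - 1)) \<and> stp L (\<sigma> t) (\<sigma> t \<circ> sw (j - 1))"
      using repstep[OF rs j] t by auto
    then have "\<sigma> (Suc t) = \<sigma> t \<circ> sw (j - 1)" using uniq rs t by (metis Suc_leI)
    then show "stp L (\<sigma> t) (\<sigma> (Suc t))" using a by simp
  qed
  have s0: "\<sigma> 0 = id" using uniq rs rep0 by blast
  have sN: "\<sigma> N L = 0"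
  proof -
    have "tau N ! L = lam ! (\<sigma> N L)" using rs[of N] unfolding rep_def by auto
    then have "lam ! (\<sigma> N L) = lam ! 0" using fin by simp
    moreover have "\<sigma> N L \<le> L" using gs[of N] gd_le by auto
    ultimately show ?thesis using lamq by auto
  qed
  have iN: "inv (\<sigma> N) 0 = L" using gs[of N] sN gd_inv_eq by auto
  obtain k where k: "2^k \<le> L" "L < 2^(k+1)" using ex_power_ivl1[of 2 L] L2 by auto
  have "\<exists>t. 0 < t \<and> t \<le> N \<and> Suc k \<le> cnt (\<sigma> t) 1 (Suc L)"
    apply (rule CLD[OF CL_all, where y=0])
    using k ps gs s0 iN by (auto simp: cln_def)
  then obtain t where t: "t \<le> N" "Suc k \<le> cnt (\<sigma> t) 1 (Suc L)" by auto
  have sub2: "{p. 1 \<le> p \<and> p < Suc L \<and> \<sigma> t p \<noteq> p} \<subseteq> {l. l \<le> L \<and> tau t ! l \<noteq> lam ! l}"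
  proof
    fix p assume "p \<in> {p. 1 \<le> p \<and> p < Suc L \<and> \<sigma> t p \<noteq> p}"
    then have p: "p \<le> L" "\<sigma> t p \<noteq> p" by auto
    have "tau t ! p = lam ! (\<sigma> t p)" using rs[of t] t p unfolding rep_def by auto
    moreover have "\<sigma> t p \<le> L" using gs[of t] t p gd_le by auto
    ultimately have "tau t ! p \<noteq> lam ! p" using lamq p by auto
    then show "p \<in> {l. l \<le> L \<and> tau t ! l \<noteq> lam ! l}" using p by auto
  qed
  have "cnt (\<sigma> t) 1 (Suc L) \<le> card {l. l \<le> L \<and> tau t ! l \<noteq> lam ! l}"
    unfolding cnt_def by (rule card_mono[OF _ sub2]) simp
  then have ck: "real (Suc k) \<le> real (card {l. l \<le> L \<and> tau t ! l \<noteq> lam ! l})" using t by simp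
  have "ln (real L) < ln (2 ^ (k+1))" using k L2 by (subst ln_less_cancel_iff) (auto simp del: power_Suc)
  also have "\<dots> = real (k+1) * ln 2" by (rule ln_realpow)
  also have "\<dots> \<le> real (k+1)" using ln_2_less_1 by (simp add: mult_left_le)
  finally have "ln (real L) \<le> real (Suc k)" by simp
  then show ?thesis using ck t by (intro exI[of _ t]) auto
qed

theorem lemma9:
  shows "\<exists>c::real. c > 0 \<and>
    (\<forall>(L::nat) (m::nat) (lam::nat list) (tau::nat \<Rightarrow> nat list) (N::nat).
      L \<ge> 2 \<longrightarrow> length lam = L + 1 \<longrightarrow> set lam \<subseteq> {1..m} \<longrightarrow> distinct lam \<longrightarrow>
      tau 0 = lam \<longrightarrow>
      (\<forall>s\<in>{1..N}. \<exists>j\<in>{1..L}. tau s = swap_levels (j - 1) j (tau (s - 1))) \<longrightarrow>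
      tau N ! L = lam ! 0 \<longrightarrow>
      (\<exists>s\<le>N. real (card {l. l \<le> L \<and> tau s ! l \<noteq> lam ! l}) \<ge> c * ln (real L)))"
proof (rule exI[of _ "1::real"], intro conjI allI impI)
  show "(0::real) < 1" by simp
next
  fix L m :: nat and lam :: "nat list" and tau :: "nat \<Rightarrow> nat list" and N :: nat
  assume "L \<ge> 2" "length lam = L + 1" "set lam \<subseteq> {1..m}" "distinct lam" "tau 0 = lam"
    "\<forall>s\<in>{1..N}. \<exists>j\<in>{1..L}. tau s = swap_levels (j - 1) j (tau (s - 1))"
    "tau N ! L = lam ! 0"
  then have "\<exists>s\<le>N. ln (real L) \<le> real (card {l. l \<le> L \<and> tau s ! l \<noteq> lam ! l})"
    by (rule main_bound)
  then show "\<exists>s\<le>N. real (card {l. l \<le> L \<and> tau s ! l \<noteq> lam ! l}) \<ge> 1 * ln (real L)" by simp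
qed

end
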